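(* Let $C=L_1;\ldots;L_d$ be a sorting network on $n$ channels of depth $d$ that contains no redundant comparators. Then for every $k$ with $1\le k<d$ and every comparator $(i,j)\in L_k$, the comparator $(i,j)$ connects adjacent $k$-blocks of $C$; that is, every channel $m$ with $i<m<j$ belongs either to the $k$-block containing $i$ or to the $k$-block containing $j$.
   Context: Channels are numbered $1,\ldots,n$. A comparator network on $n$ channels of depth $d$ is a sequence $C=L_1;\ldots;L_d$ of layers; each layer is a set of comparators $(i,j)$ with $1\le i<j\le n$, and each channel occurs in at most one comparator of a given layer. An input $\bar x\in\{0,1\}^n$ propagates through $C$ as follows: $\bar x_0=\bar x$, and for $0<k\le d$, $\bar x_k$ is obtained from $\bar x_{k-1}$ by, for each comparator $(i,j)\in L_k$, putting the minimum of the values at positions $i,j$ of $\bar x_{k-1}$ at position $i$ and the maximum at position $j$ (other positions unchanged). The output is $C(\bar x)=\bar x_d$. $C$ is a sorting network if $C(\bar x)$ is sorted in non-decreasing order for every $\bar x\in\{0,1\}^n$. A comparator $(i,j)$ in layer $L_\ell$ is redundant if for every input $\bar x\in\{0,1\}^n$ the entries of $\bar x_{\ell-1}$ at positions $i$ and $j$ satisfy $(\bar x_{\ell-1})_i\le(\bar x_{\ell-1})_j$. For $0\le k<d$, the $k$-blocks of $C$ are the vertex sets of the connected components of the graph on the channels $\{1,\ldots,n\}$ having an edge $\{i,j\}$ for every comparator $(i,j)$ occurring in some layer $L_{k'}$ with $k'>k$; thus the $k$-blocks partition the set of channels. *)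

theory Defs
  imports Main
begin

type_synonym layer = "(nat \<times> nat) set"
type_synonym network = "layer list"  (* L_1 ; ... ; L_d  is  C ! 0, ..., C ! (d-1) *)

definition is_layer :: "nat \<Rightarrow> layer \<Rightarrow> bool" where
  "is_layer n L \<longleftrightarrow>
     (\<forall>(i,j)\<in>L. 1 \<le> i \<and> i < j \<and> j \<le> n) \<and>
     (\<forall>(i,j)\<in>L. \<forall>(i',j')\<in>L. {i,j} \<inter> {i',j'} \<noteq> {} \<longrightarrow> (i,j) = (i',j'))"

definition is_network :: "nat \<Rightarrow> network \<Rightarrow> bool" where
  "is_network n C \<longleftrightarrow> (\<forall>L\<in>set C. is_layer n L)"

definition binary_input :: "nat \<Rightarrow> (nat \<Rightarrow> nat) \<Rightarrow> bool" where
  "binary_input n x \<longleftrightarrow> (\<forall>p. x p \<in> {0,1}) \<and> (\<forall>p. p \<notin> {1..n} \<longrightarrow> x p = 0)"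

definition apply_layer :: "layer \<Rightarrow> (nat \<Rightarrow> nat) \<Rightarrow> (nat \<Rightarrow> nat)" where
  "apply_layer L x = (\<lambda>p.
     if (\<exists>q. (p,q) \<in> L) then min (x p) (x (THE q. (p,q) \<in> L))
     else if (\<exists>q. (q,p) \<in> L) then max (x (THE q. (q,p) \<in> L)) (x p)
     else x p)"

definition run_prefix :: "network \<Rightarrow> nat \<Rightarrow> (nat \<Rightarrow> nat) \<Rightarrow> (nat \<Rightarrow> nat)" where
  "run_prefix C k x = foldl (\<lambda>y L. apply_layer L y) x (take k C)"

definition sorting_network :: "nat \<Rightarrow> network \<Rightarrow> bool" where
  "sorting_network n C \<longleftrightarrow> is_network n C \<and>
     (\<forall>x. binary_input n x \<longrightarrow>
        (\<forall>i j. 1 \<le> i \<and> i \<le> j \<and> j \<le> n \<longrightarrow>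
           run_prefix C (length C) x i \<le> run_prefix C (length C) x j))"

definition redundant :: "nat \<Rightarrow> network \<Rightarrow> nat \<Rightarrow> nat \<Rightarrow> nat \<Rightarrow> bool" where
  "redundant n C l i j \<longleftrightarrow>
     (\<forall>x. binary_input n x \<longrightarrow> run_prefix C (l - 1) x i \<le> run_prefix C (l - 1) x j)"

definition later_edges :: "network \<Rightarrow> nat \<Rightarrow> (nat \<times> nat) set" where
  "later_edges C k = (\<Union>k'\<in>{k+1..length C}. C ! (k' - 1))"

definition kblock :: "nat \<Rightarrow> network \<Rightarrow> nat \<Rightarrow> nat \<Rightarrow> nat set" where
  "kblock n C k i = {m \<in> {1..n}. (i, m) \<in> (later_edges C k \<union> (later_edges C k)\<inverse>)\<^sup>*}"

end

theory Submission
  imports Defs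
begin


definition partner :: "layer \<Rightarrow> nat \<Rightarrow> nat" where
  "partner L c = (if \<exists>q. (c,q) \<in> L then THE q. (c,q)\<in>L else if \<exists>q. (q,c)\<in>L then THE q. (q,c)\<in>L else c)"

lemma apply_layer_partner:
  "apply_layer L v c = (if \<exists>q. (c,q)\<in>L then min (v c) (v (partner L c))
     else if \<exists>q. (q,c)\<in>L then max (v (partner L c)) (v c) else v c)"
  by (simp add: apply_layer_def partner_def)

lemma layer_uniq:
  assumes "is_layer n L" "(a,b)\<in>L" "(c,e)\<in>L" "{a,b} \<inter> {c,e} \<noteq> {}"
  shows "(a,b) = (c,e)"
proof -
  have h: "\<forall>(i,j)\<in>L. \<forall>(i',j')\<in>L. {i,j} \<inter> {i',j'} \<noteq> {} \<longrightarrow> (i,j) = (i',j')"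
    using assms(1) unfolding is_layer_def by (elim conjE)
  have "\<forall>(i',j')\<in>L. {a,b} \<inter> {i',j'} \<noteq> {} \<longrightarrow> (a,b) = (i',j')" using bspec[OF h assms(2)] by simp
  from bspec[OF this assms(3)] have "{a,b} \<inter> {c,e} \<noteq> {} \<longrightarrow> (a,b) = (c,e)"
    by (simp only: prod.case)
  then show ?thesis using assms(4) by (rule mp)
qed

lemma layer_bounds:
  assumes "is_layer n L" "(a,b)\<in>L"
  shows "1 \<le> a \<and> a < b \<and> b \<le> n"
proof -
  have h: "\<forall>(i,j)\<in>L. 1 \<le> i \<and> i < j \<and> j \<le> n"
    using assms(1) unfolding is_layer_def by (elim conjE)
  show ?thesis using bspec[OF h assms(2)] by simp
qed

lemma layer_pair:
  assumes L: "is_layer n L" and ab: "(p,q)\<in>L"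
  shows "partner L p = q" "partner L q = p"
    "apply_layer L v p = min (v p) (v q)" "apply_layer L v q = max (v p) (v q)"
proof -
  have pq: "p < q" using layer_bounds[OF L ab] by simp
  have ex1: "\<exists>q'. (p,q')\<in>L" using ab by blast
  have t1: "(THE q'. (p,q')\<in>L) = q"
    by (rule the1_equality) (use ab layer_uniq[OF L] in blast)+
  have nq: "\<not>(\<exists>q'. (q,q')\<in>L)"
  proof
    assume "\<exists>q'. (q,q')\<in>L"
    then obtain q' where "(q,q')\<in>L" by blast
    with layer_uniq[OF L ab this] pq show False by auto
  qed
  have ex2: "\<exists>q'. (q',q)\<in>L" using ab by blast
  have t2: "(THE q'. (q',q)\<in>L) = p"
    by (rule the1_equality) (use ab layer_uniq[OF L] in blast)+
  show "partner L p = q" using ex1 t1 by (simp add: partner_def)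
  show "partner L q = p" using nq ex2 t2 by (simp add: partner_def)
  show "apply_layer L v p = min (v p) (v q)" using ex1 t1 by (simp add: apply_layer_def)
  show "apply_layer L v q = max (v p) (v q)" using nq ex2 t2 by (simp add: apply_layer_def)
qed

lemma layer_none:
  assumes "\<not>(\<exists>q. (c,q)\<in>L)" "\<not>(\<exists>q. (q,c)\<in>L)"
  shows "partner L c = c" "apply_layer L v c = v c"
  using assms by (simp_all add: partner_def apply_layer_def)

lemma layer_cases[case_names lo hi none]:
  obtains (lo) q where "(c,q)\<in>L" | (hi) p where "(p,c)\<in>L" | (none) "\<not>(\<exists>q. (c,q)\<in>L)" "\<not>(\<exists>q. (q,c)\<in>L)"
  by blast

lemma apply_sum_pair:
  assumes L: "is_layer n L"
  shows "apply_layer L v c + apply_layer L v (partner L c) = v c + v (partner L c)"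
proof (cases rule: layer_cases[of c L])
  case (lo q) then show ?thesis using layer_pair[OF L lo] by (simp add: min_def max_def)
next
  case (hi p) then show ?thesis using layer_pair[OF L hi] by (simp add: min_def max_def)
next
  case none then show ?thesis using layer_none[OF none] by simp
qed

lemma partner_invol:
  assumes L: "is_layer n L"
  shows "partner L (partner L c) = c"
proof (cases rule: layer_cases[of c L])
  case (lo q) then show ?thesis using layer_pair[OF L lo] by simp
next
  case (hi p) then show ?thesis using layer_pair[OF L hi] by simp
next
  case none then show ?thesis using layer_none[OF none] by simp
qed

lemma partner_range:
  assumes L: "is_layer n L" and c: "c \<in> {1..n}"
  shows "partner L c \<in> {1..n}"
proof (cases rule: layer_cases[of c L])
  case (lo q) then show ?thesis using layer_pair[OF L lo] layer_bounds[OF L lo] by simp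
next
  case (hi p) then show ?thesis using layer_pair[OF L hi] layer_bounds[OF L hi] by simp
next
  case none then show ?thesis using layer_none[OF none] c by simp
qed

lemma sum_apply_layer:
  assumes L: "is_layer n L"
  shows "(\<Sum>c\<in>{1..n}. apply_layer L v c) = (\<Sum>c\<in>{1..n}. v c)"
proof -
  have pr: "\<And>c. Suc 0 \<le> c \<Longrightarrow> c \<le> n \<Longrightarrow> Suc 0 \<le> partner L c \<and> partner L c \<le> n"
    using partner_range[OF L] by auto
  have r: "\<And>f::nat\<Rightarrow>nat. (\<Sum>c\<in>{1..n}. f (partner L c)) = (\<Sum>c\<in>{1..n}. f c)"
    by (rule sum.reindex_bij_witness[of _ "partner L" "partner L"])
       (auto simp: partner_invol[OF L] intro: pr[THEN conjunct1] pr[THEN conjunct2])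
  have e1: "(\<Sum>c\<in>{1..n}. apply_layer L v c + apply_layer L v (partner L c)) =
     (\<Sum>c\<in>{1..n}. apply_layer L v c) + (\<Sum>c\<in>{1..n}. apply_layer L v (partner L c))"
    by (rule sum.distrib)
  have e2: "(\<Sum>c\<in>{1..n}. v c + v (partner L c)) = (\<Sum>c\<in>{1..n}. v c) + (\<Sum>c\<in>{1..n}. v (partner L c))"
    by (rule sum.distrib)
  have e3: "(\<Sum>c\<in>{1..n}. apply_layer L v c + apply_layer L v (partner L c)) = (\<Sum>c\<in>{1..n}. v c + v (partner L c))"
    by (simp add: apply_sum_pair[OF L])
  show ?thesis using e1 e2 e3 r[of v] r[of "apply_layer L v"] by linarith
qed

lemma apply_val: "apply_layer L v c = v c \<or> apply_layer L v c = v (partner L c)"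
  by (simp add: apply_layer_partner min_def max_def)

lemma apply_val2:
  assumes L: "is_layer n L"
  shows "v c = apply_layer L v c \<or> v c = apply_layer L v (partner L c)"
proof (cases rule: layer_cases[of c L])
  case (lo q) then show ?thesis using layer_pair[OF L lo] by (simp add: min_def max_def)
next
  case (hi p) then show ?thesis using layer_pair[OF L hi] by (simp add: min_def max_def)
next
  case none then show ?thesis using layer_none[OF none] by simp
qed

lemma apply_mono:
  assumes "\<And>c. v c \<le> w c" shows "apply_layer L v c \<le> apply_layer L w c"
proof -
  have "min (v c) (v (partner L c)) \<le> min (w c) (w (partner L c))" by (intro min.mono assms)
  moreover have "max (v (partner L c)) (v c) \<le> max (w (partner L c)) (w c)" by (intro max.mono assms)
  ultimately show ?thesis using assms[of c] unfolding apply_layer_partner by (simp only: split: if_split) blast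
qed

definition runL :: "layer list \<Rightarrow> (nat \<Rightarrow> nat) \<Rightarrow> (nat \<Rightarrow> nat)" where
  "runL Ls v = foldl (\<lambda>y L. apply_layer L y) v Ls"

lemma runL_simps[simp]: "runL [] v = v" "runL (L # Ls) v = runL Ls (apply_layer L v)"
  "runL (Ls @ Ms) v = runL Ms (runL Ls v)"
  by (simp_all add: runL_def)

lemma run_prefix_runL: "run_prefix C k x = runL (take k C) x"
  by (simp add: run_prefix_def runL_def)

lemma runL_mono: "(\<And>c. v c \<le> w c) \<Longrightarrow> runL Ls v c \<le> runL Ls w c"
proof (induction Ls arbitrary: v w)
  case Nil then show ?case by simp
next
  case (Cons L Ls) then show ?case by (simp add: apply_mono)
qed

lemma runL_bin: "(\<And>c. v c \<in> {0,1}) \<Longrightarrow> runL Ls v c \<in> {0,1}"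
proof (induction Ls arbitrary: v)
  case Nil then show ?case by simp
next
  case (Cons L Ls)
  have "\<And>c. apply_layer L v c \<in> {0,1}" using apply_val Cons.prems by metis
  then show ?case using Cons.IH by simp
qed

lemma runL_sum: "(\<forall>L\<in>set Ls. is_layer n L) \<Longrightarrow> (\<Sum>c\<in>{1..n}. runL Ls v c) = (\<Sum>c\<in>{1..n}. v c)"
proof (induction Ls arbitrary: v)
  case Nil then show ?case by simp
next
  case (Cons L Ls) then show ?case using sum_apply_layer[of n L v] by simp
qed

lemma apply_sorted:
  assumes L: "is_layer n L" and s: "\<And>p q. 1 \<le> p \<Longrightarrow> p \<le> q \<Longrightarrow> q \<le> n \<Longrightarrow> v p \<le> v q"
  shows "apply_layer L v = v"
proof
  fix c
  show "apply_layer L v c = v c"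
  proof (cases rule: layer_cases[of c L])
    case (lo q) then show ?thesis using layer_pair[OF L lo] layer_bounds[OF L lo] s[of c q] by simp
  next
    case (hi p) then show ?thesis using layer_pair[OF L hi] layer_bounds[OF L hi] s[of p c] by simp
  next
    case none then show ?thesis using layer_none[OF none] by simp
  qed
qed

lemma runL_sorted:
  assumes "\<forall>L\<in>set Ls. is_layer n L" and s: "\<And>p q. 1 \<le> p \<Longrightarrow> p \<le> q \<Longrightarrow> q \<le> n \<Longrightarrow> v p \<le> v q"
  shows "runL Ls v = v"
  using assms(1)
proof (induction Ls)
  case Nil then show ?case by simp
next
  case (Cons L Ls)
  have "apply_layer L v = v" by (rule apply_sorted[of n]) (use Cons.prems s in auto)
  then show ?case using Cons by simp
qed

lemma partner_closed:
  assumes L: "is_layer n L" and B: "\<forall>(p,q)\<in>L. p \<in> B \<longleftrightarrow> q \<in> B" and c: "c \<in> B"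
  shows "partner L c \<in> B"
proof (cases rule: layer_cases[of c L])
  case (lo q) then show ?thesis using layer_pair[OF L lo] B c by auto
next
  case (hi p) then show ?thesis using layer_pair[OF L hi] B c by auto
next
  case none then show ?thesis using layer_none[OF none] c by simp
qed

lemma apply_image:
  assumes L: "is_layer n L" and B: "\<forall>(p,q)\<in>L. p \<in> B \<longleftrightarrow> q \<in> B"
  shows "apply_layer L v ` B = v ` B"
proof
  show "apply_layer L v ` B \<subseteq> v ` B"
  proof (rule image_subsetI)
    fix c assume c: "c \<in> B"
    from apply_val[of L v c] show "apply_layer L v c \<in> v ` B" using partner_closed[OF L B c] c by auto
  qed
  show "v ` B \<subseteq> apply_layer L v ` B"
  proof (rule image_subsetI)
    fix c assume c: "c \<in> B"
    from apply_val2[OF L, of v c] show "v c \<in> apply_layer L v ` B" using partner_closed[OF L B c] c by auto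
  qed
qed

lemma runL_image:
  assumes "\<forall>L\<in>set Ls. is_layer n L \<and> (\<forall>(p,q)\<in>L. p \<in> B \<longleftrightarrow> q \<in> B)"
  shows "runL Ls v ` B = v ` B"
  using assms
proof (induction Ls arbitrary: v)
  case Nil then show ?case by simp
next
  case (Cons L Ls)
  have "apply_layer L v ` B = v ` B" by (rule apply_image[of n]) (use Cons.prems in auto)
  then show ?case using Cons by simp
qed



lemma sorted_bin_count:
  fixes v :: "nat \<Rightarrow> nat"
  assumes b: "\<forall>c\<in>{1..n}. v c \<in> {0,1}"
    and s: "\<forall>p q. 1\<le>p \<longrightarrow> p\<le>q \<longrightarrow> q\<le>n \<longrightarrow> v p \<le> v q"
    and w: "(\<Sum>c\<in>{1..n}. v c) = w" and c: "c \<in> {1..n}"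
  shows "v c = (if n + 1 \<le> c + w then 1 else 0)"
proof -
  define U where "U = {c\<in>{1..n}. v c = 1}"
  have "(\<Sum>c\<in>{1..n}. v c) = (\<Sum>c\<in>{1..n}. if v c = 1 then 1 else 0)"
    by (rule sum.cong) (use b in auto)
  also have "\<dots> = card U" by (simp add: sum.If_cases U_def Int_def)
  finally have cw: "card U = w" using w by simp
  show ?thesis
  proof (cases "v c = 1")
    case True
    have "{c..n} \<subseteq> U"
    proof
      fix u assume u: "u \<in> {c..n}"
      then have "v c \<le> v u" "u \<in> {1..n}" using s c by auto
      moreover have "v u \<in> {0,1}" using b \<open>u \<in> {1..n}\<close> by blast
      ultimately show "u \<in> U" using True by (auto simp: U_def)
    qed
    then have "card {c..n} \<le> card U" by (intro card_mono) (auto simp: U_def)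
    then show ?thesis using True cw by simp
  next
    case False
    then have v0: "v c = 0" using b c by auto
    have "U \<subseteq> {c+1..n}"
    proof
      fix u assume "u \<in> U"
      then have u: "1 \<le> u" "u \<le> n" "v u = 1" by (auto simp: U_def)
      have "c < u"
      proof (rule ccontr)
        assume "\<not> c < u"
        then have "v u \<le> v c" using s u c by auto
        then show False using u v0 by simp
      qed
      then show "u \<in> {c+1..n}" using u by simp
    qed
    then have "card U \<le> card {c+1..n}" by (intro card_mono) auto
    then show ?thesis using v0 cw c by (cases "n + 1 \<le> c + w") auto
  qed
qed



lemma superset_card:
  assumes "X \<subseteq> {1..n}" "card X \<le> w" "w \<le> n"
  shows "\<exists>S. X \<subseteq> S \<and> S \<subseteq> {1..(n::nat)} \<and> card S = w"
proof -
  have fX: "finite X" using assms(1) finite_subset by blast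
  have "card ({1..n} - X) = n - card X" using assms(1) by (simp add: card_Diff_subset fX)
  then have "w - card X \<le> card ({1..n} - X)" using assms by simp
  then obtain T where T: "T \<subseteq> {1..n} - X" "card T = w - card X"
    using obtain_subset_with_card_n by metis
  have fT: "finite T" using T(1) finite_subset by blast
  have "card (X \<union> T) = card X + card T" using T(1) fX fT by (subst card_Un_disjoint) auto
  then show ?thesis using T assms by (intro exI[of _ "X \<union> T"]) auto
qed

lemma later_sub: "k \<le> k' \<Longrightarrow> later_edges C k' \<subseteq> later_edges C k"
  unfolding later_edges_def by (intro UN_mono) auto

lemma drop_later:
  assumes "L \<in> set (drop k C)" shows "L \<subseteq> later_edges C k"
proof -
  from assms obtain t where t: "t < length (drop k C)" "L = drop k C ! t"
    by (auto simp: in_set_conv_nth)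
  then have "L = C ! (k + t)" "k + t < length C" by auto
  then show ?thesis unfolding later_edges_def
    by (intro subsetI UN_I[of "k+t+1"]) auto
qed

lemma block_closed:
  assumes L: "is_layer n L" and sub: "L \<subseteq> later_edges C k"
  shows "\<forall>(p,q)\<in>L. p \<in> kblock n C k c \<longleftrightarrow> q \<in> kblock n C k c"
proof (clarify)
  fix p q assume pq: "(p,q) \<in> L"
  let ?E = "later_edges C k \<union> (later_edges C k)\<inverse>"
  have b: "p \<in> {1..n}" "q \<in> {1..n}" using layer_bounds[OF L pq] by auto
  have e1: "(p,q) \<in> ?E" "(q,p) \<in> ?E" using pq sub by auto
  show "p \<in> kblock n C k c \<longleftrightarrow> q \<in> kblock n C k c"
    unfolding kblock_def using b e1 rtrancl_into_rtrancl[of c p ?E q] rtrancl_into_rtrancl[of c q ?E p]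
    by auto
qed



lemma main_step:
  assumes sn: "sorting_network n C"
    and k: "1 \<le> k" "k \<le> length C"
    and ij: "(i,j) \<in> C!(k-1)"
    and nr: "\<not> redundant n C k i j"
    and m: "i < m" "m < j"
    and Bi: "\<forall>c\<in>kblock n C k i. c < m"
    and Bj: "\<forall>c\<in>kblock n C k j. m < c"
  shows False
proof -
  have layers: "\<forall>L\<in>set C. is_layer n L" using sn by (simp add: sorting_network_def is_network_def)
  define L where "L = C!(k-1)"
  have L: "is_layer n L" using layers k unfolding L_def by auto
  have ijL: "(i,j) \<in> L" using ij L_def by simp
  have bnd: "1 \<le> i" "i < j" "j \<le> n" using layer_bounds[OF L ijL] by auto
  define inp :: "nat set \<Rightarrow> nat \<Rightarrow> nat" where "inp X = (\<lambda>p. if p \<in> X then 1 else 0)" for X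
  define y where "y X = run_prefix C (k-1) (inp X)" for X
  have takek: "take k C = take (k-1) C @ [L]"
    using k unfolding L_def by (metis Suc_diff_1 Suc_le_eq less_le_trans take_Suc_conv_app_nth zero_less_one)
  have takeall: "take (length C) C = take k C @ drop k C" by simp
  define z where "z X = apply_layer L (y X)" for X
  have zrun: "run_prefix C k (inp X) = z X" for X
    unfolding z_def y_def run_prefix_runL takek by simp
  have orun: "run_prefix C (length C) (inp X) = runL (drop k C) (z X)" for X
    unfolding run_prefix_runL takeall runL_simps zrun[symmetric] run_prefix_runL ..
  have binp: "binary_input n (inp X)" if "X \<subseteq> {1..n}" for X
    using that unfolding binary_input_def inp_def by auto
  have ybin: "y X c \<in> {0,1}" for X c
    unfolding y_def run_prefix_runL by (rule runL_bin) (simp add: inp_def)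
  have ymono: "y X c \<le> y Y c" if "X \<subseteq> Y" for X Y c
    unfolding y_def run_prefix_runL by (rule runL_mono) (use that in \<open>auto simp: inp_def\<close>)
  have sum_inp: "(\<Sum>c\<in>{1..n}. inp X c) = card X" if "X \<subseteq> {1..n}" for X
  proof -
    have "(\<Sum>c\<in>{1..n}. inp X c) = (\<Sum>c\<in>{1..n}. if c \<in> X then 1 else 0)" by (simp add: inp_def)
    also have "\<dots> = card ({1..n} \<inter> X)" by (simp add: sum.If_cases)
    finally show ?thesis using that by (simp add: Int_absorb1)
  qed
  have oform: "run_prefix C (length C) (inp X) c = (if n + 1 \<le> c + card X then 1 else 0)"
    if X: "X \<subseteq> {1..n}" and c: "c \<in> {1..n}" for X c
  proof (rule sorted_bin_count[OF _ _ _ c])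
    let ?o = "run_prefix C (length C) (inp X)"
    show "\<forall>c\<in>{1..n}. ?o c \<in> {0,1}"
      unfolding run_prefix_runL by (intro ballI runL_bin) (simp add: inp_def)
    show "\<forall>p q. 1\<le>p \<longrightarrow> p\<le>q \<longrightarrow> q\<le>n \<longrightarrow> ?o p \<le> ?o q"
      using sn binp[OF X] unfolding sorting_network_def by blast
    have "(\<Sum>c\<in>{1..n}. ?o c) = (\<Sum>c\<in>{1..n}. inp X c)"
      unfolding run_prefix_runL by (rule runL_sum) (use layers in auto)
    then show "(\<Sum>c\<in>{1..n}. ?o c) = card X" using sum_inp[OF X] by simp
  qed
  have img: "run_prefix C (length C) (inp X) ` kblock n C k c = z X ` kblock n C k c" for X c
    unfolding orun
  proof (rule runL_image)
    show "\<forall>L\<in>set (drop k C). is_layer n L \<and> (\<forall>(p,q)\<in>L. p \<in> kblock n C k c \<longleftrightarrow> q \<in> kblock n C k c)"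
    proof
      fix L' assume L': "L' \<in> set (drop k C)"
      have "is_layer n L'" using layers L' by (meson in_set_dropD)
      then show "is_layer n L' \<and> (\<forall>(p,q)\<in>L'. p \<in> kblock n C k c \<longleftrightarrow> q \<in> kblock n C k c)"
        using block_closed[OF _ drop_later[OF L']] by blast
    qed
  qed
  have iB: "i \<in> kblock n C k i" and jB: "j \<in> kblock n C k j"
    using bnd unfolding kblock_def by auto
  have kbsub: "kblock n C k c \<subseteq> {1..n}" for c unfolding kblock_def by auto
  have rng: "y X i = 1 \<longleftrightarrow> y X j = 0"
    if X: "X \<subseteq> {1..n}" and c1: "n - m \<le> card X" and c2: "card X \<le> n - m + 1" for X
  proof -
    have "z X ` kblock n C k i \<subseteq> {0}"
    proof -
      have "run_prefix C (length C) (inp X) c = 0" if "c \<in> kblock n C k i" for c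
      proof -
        have "c \<in> {1..n}" using that unfolding kblock_def by auto
        moreover have "c < m" using Bi that by auto
        ultimately show ?thesis using oform[OF X, of c] c2 c1 m bnd by auto
      qed
      then show ?thesis using img[of X i] by auto
    qed
    then have zi: "z X i = 0" using iB by auto
    have "z X ` kblock n C k j \<subseteq> {1}"
    proof -
      have "run_prefix C (length C) (inp X) c = 1" if "c \<in> kblock n C k j" for c
      proof -
        have "c \<in> {1..n}" using that unfolding kblock_def by auto
        moreover have "m < c" using Bj that by auto
        ultimately show ?thesis using oform[OF X, of c] c2 c1 m bnd by auto
      qed
      then show ?thesis using img[of X j] by auto
    qed
    then have zj: "z X j = 1" using jB by auto
    have "min (y X i) (y X j) = 0" "max (y X i) (y X j) = 1"
      using zi zj layer_pair(3,4)[OF L ijL, where v="y X"] unfolding z_def by auto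
    then show ?thesis using ybin[of X i] ybin[of X j] by auto
  qed
  have ybin1: "y X c = 1" if "1 \<le> y X c" for X c using ybin[of X c] that by auto
  have ybin0: "y X c = 0" if "y X c \<le> 0" for X c using that by simp
  have mn: "2 \<le> m" "m < n" using bnd m by auto
  define w1 where "w1 = n - m + 1"
  define T0 where "T0 = {m..n}"
  have w1n: "w1 \<le> n" unfolding w1_def using mn by simp
  have cT0: "card T0 = w1" unfolding T0_def w1_def using mn by simp
  have T0sub: "T0 \<subseteq> {1..n}" unfolding T0_def using mn by auto
  obtain x where x: "binary_input n x" "\<not> run_prefix C (k-1) x i \<le> run_prefix C (k-1) x j"
    using nr unfolding redundant_def by blast
  define X0 where "X0 = {p. x p = 1}"
  have xX0: "x = inp X0"
  proof
    fix p show "x p = inp X0 p" using x(1) unfolding binary_input_def inp_def X0_def by auto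
  qed
  have X0sub: "X0 \<subseteq> {1..n}"
  proof
    fix p assume "p \<in> X0"
    then have xp: "x p = 1" by (simp add: X0_def)
    have "p \<notin> {1..n} \<longrightarrow> x p = 0" using x(1) unfolding binary_input_def by blast
    then show "p \<in> {1..n}" using xp by (cases "p \<in> {1..n}") auto
  qed
  have yX0: "y X0 i = 1" "y X0 j = 0"
    using x(2) ybin[of X0 i] ybin[of X0 j] unfolding y_def xX0 by auto
  have fin: "finite X" if "X \<subseteq> {1..n}" for X using that finite_subset by blast
  obtain S0 where S0: "S0 \<subseteq> {1..n}" "card S0 = w1" "y S0 i = 1"
  proof (cases "card X0 \<le> w1")
    case True
    obtain S where S: "X0 \<subseteq> S" "S \<subseteq> {1..n}" "card S = w1"
      using superset_card[OF X0sub True w1n] by auto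
    have "y S i = 1" using ymono[OF S(1), of i] yX0 ybin1 by simp
    then show ?thesis using that S by blast
  next
    case False
    then have "n - m \<le> card X0" unfolding w1_def by simp
    then obtain T where T: "T \<subseteq> X0" "card T = n - m" by (metis obtain_subset_with_card_n)
    have Tsub: "T \<subseteq> {1..n}" using T X0sub by auto
    have "y T j = 0" using ymono[OF T(1), of j] yX0 by simp
    then have yTi: "y T i = 1" using rng[OF Tsub] T(2) by simp
    obtain S where S: "T \<subseteq> S" "S \<subseteq> {1..n}" "card S = w1"
      using superset_card[OF Tsub _ w1n] T(2) unfolding w1_def by auto
    have "y S i = 1" using ymono[OF S(1), of i] yTi ybin1 by simp
    then show ?thesis using that S by blast
  qed
  have exch: "\<forall>S. S \<subseteq> {1..n} \<longrightarrow> card S = w1 \<longrightarrow> card (S - T0) = N \<longrightarrow> y S i = 1 \<longrightarrow> y T0 i = 1" for N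
  proof (induction N)
    case 0
    show ?case
    proof (intro allI impI)
      fix S assume S: "S \<subseteq> {1..n}" "card S = w1" "card (S - T0) = 0" "y S i = 1"
      have "S - T0 = {}" using S(3) fin[OF S(1)] by simp
      then have "S \<subseteq> T0" by blast
      then have "S = T0" using card_subset_eq[of T0 S] fin[OF T0sub] S(2) cT0 by simp
      then show "y T0 i = 1" using S(4) by simp
    qed
  next
    case (Suc N)
    show ?case
    proof (intro allI impI)
      fix S assume S: "S \<subseteq> {1..n}" "card S = w1" "card (S - T0) = Suc N" "y S i = 1"
      have fS: "finite S" using fin[OF S(1)] .
      obtain a where a: "a \<in> S" "a \<notin> T0" using S(3) by (metis Diff_iff card_0_eq card.infinite ex_in_conv nat.distinct(1))
      have "\<not> T0 \<subseteq> S"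
      proof
        assume "T0 \<subseteq> S"
        then have "T0 = S" using card_subset_eq[of S T0] fS S(2) cT0 by simp
        then show False using a by simp
      qed
      then obtain b where b: "b \<in> T0" "b \<notin> S" by blast
      define S1 where "S1 = S - {a}"
      have S1sub: "S1 \<subseteq> {1..n}" "S1 \<subseteq> S" using S(1) unfolding S1_def by auto
      have cS1: "card S1 = n - m" unfolding S1_def using a fS S(2) unfolding w1_def by simp
      have "y S j = 0" using rng[OF S(1)] S(2,4) unfolding w1_def by simp
      then have "y S1 j = 0" using ymono[OF S1sub(2), of j] by simp
      then have yS1: "y S1 i = 1" using rng[OF S1sub(1)] cS1 by simp
      define S2 where "S2 = insert b S1"
      have S2sub: "S2 \<subseteq> {1..n}" using S1sub b T0sub unfolding S2_def by auto
      have "b \<notin> S1" using b S1sub by auto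
      then have cS2: "card S2 = w1" unfolding S2_def using fin[OF S1sub(1)] cS1 unfolding w1_def by simp
      have yS2: "y S2 i = 1" using ymono[of S1 S2 i] yS1 ybin1 unfolding S2_def by auto
      have "S2 - T0 = (S - T0) - {a}" unfolding S2_def S1_def using b by auto
      then have "card (S2 - T0) = N" using S(3) a by simp
      then show "y T0 i = 1" using Suc.IH S2sub cS2 yS2 by blast
    qed
  qed
  have yT0: "y T0 i = 1" using exch S0 by blast
  have "y T0 = inp T0"
    unfolding y_def run_prefix_runL
  proof (rule runL_sorted[of _ n])
    show "\<forall>L\<in>set (take (k - 1) C). is_layer n L" using layers by (meson in_set_takeD)
    show "inp T0 p \<le> inp T0 q" if "1 \<le> p" "p \<le> q" "q \<le> n" for p q
      using that unfolding inp_def T0_def by auto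
  qed
  then show False using yT0 m unfolding inp_def T0_def by simp
qed



definition Qprop :: "nat \<Rightarrow> network \<Rightarrow> nat \<Rightarrow> bool" where
  "Qprop n C k \<longleftrightarrow> (\<forall>(u,v)\<in>C ! (k - 1). \<forall>m. u < m \<and> m < v \<longrightarrow>
              m \<in> kblock n C k u \<or> m \<in> kblock n C k v)"

lemma interval_reach:
  assumes sn: "sorting_network n C"
    and Ql: "\<And>k'. k < k' \<Longrightarrow> k' \<le> length C \<Longrightarrow> Qprop n C k'"
    and pq: "(p,q) \<in> (later_edges C k \<union> (later_edges C k)\<inverse>)\<^sup>*"
  shows "\<forall>m. min p q \<le> m \<and> m \<le> max p q \<longrightarrow> (p,m) \<in> (later_edges C k \<union> (later_edges C k)\<inverse>)\<^sup>*"
  using pq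
proof (induction rule: rtrancl_induct)
  case base then show ?case by auto
next
  case (step q r)
  let ?E = "later_edges C k \<union> (later_edges C k)\<inverse>"
  have layers: "\<forall>L\<in>set C. is_layer n L" using sn by (simp add: sorting_network_def is_network_def)
  have pr: "(p,r) \<in> ?E\<^sup>*" using step by (meson rtrancl_into_rtrancl)
  obtain u v where uv: "(u,v) \<in> later_edges C k" "{u,v} = {q,r}"
    using step(2) by auto
  from uv(1) obtain k' where k': "k' \<in> {k+1..length C}" "(u,v) \<in> C ! (k'-1)"
    unfolding later_edges_def by blast
  have Lk': "is_layer n (C ! (k'-1))" using layers k'(1) by (auto intro: nth_mem)
  have ulv: "u < v" using layer_bounds[OF Lk' k'(2)] by simp
  have pu: "(p,u) \<in> ?E\<^sup>*" and pv: "(p,v) \<in> ?E\<^sup>*" using uv(2) step(1) pr by (auto simp: doubleton_eq_iff)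
  have mmuv: "min q r = u" "max q r = v" using uv(2) ulv by (auto simp: doubleton_eq_iff)
  show ?case
  proof (intro allI impI)
    fix m assume mm: "min p r \<le> m \<and> m \<le> max p r"
    show "(p,m) \<in> ?E\<^sup>*"
    proof (cases "min p q \<le> m \<and> m \<le> max p q")
      case True then show ?thesis using step(3) by blast
    next
      case False
      then have "u \<le> m" "m \<le> v" using mm mmuv by (auto simp: min_def max_def split: if_splits)
      show ?thesis
      proof (cases "m = u \<or> m = v")
        case True then show ?thesis using pu pv by auto
      next
        case False
        then have "u < m" "m < v" using \<open>u \<le> m\<close> \<open>m \<le> v\<close> by auto
        then have "m \<in> kblock n C k' u \<or> m \<in> kblock n C k' v"
          using Ql[of k'] k' unfolding Qprop_def by auto
        moreover have "later_edges C k' \<union> (later_edges C k')\<inverse> \<subseteq> ?E"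
          using later_sub[of k k' C] k'(1) by auto
        then have "(later_edges C k' \<union> (later_edges C k')\<inverse>)\<^sup>* \<subseteq> ?E\<^sup>*" by (rule rtrancl_mono)
        ultimately have "(u,m) \<in> ?E\<^sup>* \<or> (v,m) \<in> ?E\<^sup>*" unfolding kblock_def by blast
        then show ?thesis using pu pv by (meson rtrancl_trans)
      qed
    qed
  qed
qed

lemma all_Q:
  assumes sn: "sorting_network n C"
    and nr: "\<forall>l\<in>{1..length C}. \<forall>(i,j)\<in>C ! (l - 1). \<not> redundant n C l i j"
  shows "1 \<le> k \<Longrightarrow> k \<le> length C \<Longrightarrow> Qprop n C k"
proof (induction "length C - k" arbitrary: k rule: less_induct)
  case less
  let ?E = "later_edges C k \<union> (later_edges C k)\<inverse>"
  have Ql: "Qprop n C k'" if "k < k'" "k' \<le> length C" for k'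
    using less.hyps[of k'] that less.prems by auto
  have main: "m \<in> kblock n C k i \<or> m \<in> kblock n C k j"
    if ij: "(i,j) \<in> C ! (k-1)" and m: "i < m" "m < j" for i j m
  proof -
    have layers: "\<forall>L\<in>set C. is_layer n L" using sn by (simp add: sorting_network_def is_network_def)
    have L: "is_layer n (C ! (k-1))" using layers less.prems by (auto intro: nth_mem)
    have bnd: "1 \<le> i" "j \<le> n" using layer_bounds[OF L ij] by auto
    have mn: "m \<in> {1..n}" using bnd m by auto
    show ?thesis
    proof (rule ccontr)
      assume nm: "\<not> (m \<in> kblock n C k i \<or> m \<in> kblock n C k j)"
      have Bi: "\<forall>c\<in>kblock n C k i. c < m"
      proof (rule ballI, rule ccontr)
        fix c assume c: "c \<in> kblock n C k i" "\<not> c < m"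
        have ic: "(i,c) \<in> ?E\<^sup>*" using c(1) unfolding kblock_def by auto
        have "(i,m) \<in> ?E\<^sup>*" using interval_reach[OF sn Ql ic] m c(2) by auto
        then have "m \<in> kblock n C k i" using mn unfolding kblock_def by auto
        then show False using nm by auto
      qed
      have Bj: "\<forall>c\<in>kblock n C k j. m < c"
      proof (rule ballI, rule ccontr)
        fix c assume c: "c \<in> kblock n C k j" "\<not> m < c"
        have jc: "(j,c) \<in> ?E\<^sup>*" using c(1) unfolding kblock_def by auto
        have "(j,m) \<in> ?E\<^sup>*" using interval_reach[OF sn Ql jc] m c(2) by auto
        then have "m \<in> kblock n C k j" using mn unfolding kblock_def by auto
        then show False using nm by auto
      qed
      have "\<not> redundant n C k i j" using nr less.prems ij by auto
      then show False using main_step[OF sn less.prems ij _ m Bi Bj] by blast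
    qed
  qed
  show ?case unfolding Qprop_def using main by blast
qed

theorem theorem2:
  fixes n :: nat and C :: network
  assumes "sorting_network n C"
    and "\<forall>l\<in>{1..length C}. \<forall>(i,j)\<in>C ! (l - 1). \<not> redundant n C l i j"
  shows "\<forall>k. 1 \<le> k \<and> k < length C \<longrightarrow>
           (\<forall>(i,j)\<in>C ! (k - 1). \<forall>m. i < m \<and> m < j \<longrightarrow>
              m \<in> kblock n C k i \<or> m \<in> kblock n C k j)"
  using all_Q[OF assms] unfolding Qprop_def by auto


end
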